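(* Let $\tau_1(\mathbf X)$ be the lifetime of a coherent system whose component lifetimes $X_1,\dots,X_n$ are (possibly dependent) identically distributed as $X$, with domination function $h_1$, i.e. $\bar F_{\tau_1(\mathbf X)}(x)=h_1(\bar F_X(x))$; and let $\tau_2(\mathbf Y)$ be the lifetime of a coherent system whose component lifetimes $Y_1,\dots,Y_m$ are identically distributed as $Y$, with domination function $h_2$, i.e. $\bar F_{\tau_2(\mathbf Y)}(x)=h_2(\bar F_Y(x))$. For $p\in(0,1)$ set $H_i(p)=p h_i'(p)/h_i(p)$, $i=1,2$. Suppose that (i) $H_1(p)$ and $H_1(p)/H_2(p)$ are decreasing in $p\in(0,1)$; (ii) $(1-p)H_1'(p)/H_1(p)$ or $(1-p)H_2'(p)/H_2(p)$ is decreasing in $p\in(0,1)$; (iii) $X\underset{c}{\prec}Y$ and $Y\le_{rhr}X$. Then $\tau_1(\mathbf X)\underset{c}{\prec}\tau_2(\mathbf Y)$.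
   Context: All random variables are non-negative and absolutely continuous with support $[0,\infty)$. For a random variable $W$, $f_W$, $F_W$, $\bar F_W=1-F_W$ denote its density, cdf and survival function, $r_W=f_W/\bar F_W$ its hazard (failure) rate and $\tilde r_W=f_W/F_W$ its reversed hazard rate. $X\le_{rhr}Y$ means $F_Y(x)/F_X(x)$ is increasing in $x$. $X\underset{c}{\prec}Y$ ($X$ ages faster than $Y$ in failure rate) means $r_X(x)/r_Y(x)$ is increasing in $x\ge0$. For a coherent system with identically distributed (possibly dependent) components with common lifetime distribution $X$, the system reliability can be written $h(\bar F_X(x))$, where the domination (dual distortion) function $h:[0,1]\to[0,1]$ depends on the structure and the survival copula, is increasing and continuous with $h(0)=0$, $h(1)=1$; domination functions are assumed differentiable as needed. "Increasing" means non-decreasing, "decreasing" means non-increasing. *)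

theory Defs
  imports "HOL-Analysis.Analysis"
begin

text \<open>A lifetime distribution: cdf F with density f, absolutely continuous,
  support [0,oo). Distributions are described by (cdf, density) pairs.\<close>
definition lifetime :: "(real \<Rightarrow> real) \<Rightarrow> (real \<Rightarrow> real) \<Rightarrow> bool" where
  "lifetime F f \<longleftrightarrow>
     (\<forall>x\<le>0. F x = 0) \<and>
     strict_mono_on {0..} F \<and>
     (F \<longlongrightarrow> 1) at_top \<and>
     (\<forall>x\<ge>0. f x \<ge> 0) \<and>
     (\<forall>x\<ge>0. (F has_real_derivative f x) (at x within {0..}))"

definition surv :: "(real \<Rightarrow> real) \<Rightarrow> real \<Rightarrow> real" where
  "surv F x = 1 - F x"

definition hazard :: "(real \<Rightarrow> real) \<Rightarrow> (real \<Rightarrow> real) \<Rightarrow> real \<Rightarrow> real" where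
  "hazard F f x = f x / surv F x"

definition ages_faster ::
  "(real \<Rightarrow> real) \<Rightarrow> (real \<Rightarrow> real) \<Rightarrow> (real \<Rightarrow> real) \<Rightarrow> (real \<Rightarrow> real) \<Rightarrow> bool" where
  "ages_faster FX fX FY fY \<longleftrightarrow> mono_on {0..} (\<lambda>x. hazard FX fX x / hazard FY fY x)"

definition rhr_le :: "(real \<Rightarrow> real) \<Rightarrow> (real \<Rightarrow> real) \<Rightarrow> bool" where
  "rhr_le FX FY \<longleftrightarrow> mono_on {0<..} (\<lambda>x. FY x / FX x)"

definition domination_fun :: "(real \<Rightarrow> real) \<Rightarrow> bool" where
  "domination_fun h \<longleftrightarrow> h ` {0..1} \<subseteq> {0..1} \<and> mono_on {0..1} h \<and>
     continuous_on {0..1} h \<and> h 0 = 0 \<and> h 1 = 1"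

definition Hfun :: "(real \<Rightarrow> real) \<Rightarrow> real \<Rightarrow> real" where
  "Hfun h p = p * deriv h p / h p"

end

theory Submission
  imports Defs
begin

lemma lt_basic:
  assumes "lifetime F f"
  shows "F 0 = 0" and "\<And>x. x > 0 \<Longrightarrow> 0 < F x" and "\<And>x. x \<ge> 0 \<Longrightarrow> F x < 1"
    and "continuous_on {0..} F"
    and "\<And>x. x > 0 \<Longrightarrow> (F has_real_derivative f x) (at x)"
    and "\<And>x. x \<ge> 0 \<Longrightarrow> f x \<ge> 0"
    and "(F has_real_derivative f 0) (at 0 within {0..})"
proof -
  have z: "\<forall>x\<le>0. F x = 0" and sm: "strict_mono_on {0..} F" and lim: "(F \<longlongrightarrow> 1) at_top"
    and fn: "\<forall>x\<ge>0. f x \<ge> 0" and d: "\<forall>x\<ge>0. (F has_real_derivative f x) (at x within {0..})"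
    using assms unfolding lifetime_def by auto
  show "F 0 = 0" using z by auto
  show "0 < F x" if "x > 0" for x
    using strict_mono_onD[OF sm, of 0 x] z that by auto
  show "F x < 1" if "x \<ge> 0" for x
  proof -
    have "F (x+1) \<le> 1"
    proof (rule tendsto_lowerbound[OF lim])
      show "\<forall>\<^sub>F i in at_top. F (x + 1) \<le> F i"
        unfolding eventually_at_top_linorder
      proof (intro exI allI impI)
        fix n assume "n \<ge> x + 1"
        then show "F (x + 1) \<le> F n" using strict_mono_onD[OF sm, of "x+1" n] that
          by (cases "n = x + 1") auto
      qed
    qed simp
    moreover have "F x < F (x+1)" using sm that by (simp add: strict_mono_onD)
    ultimately show ?thesis by simp
  qed
  show "continuous_on {0..} F"
    unfolding continuous_on_eq_continuous_within using d DERIV_continuous by blast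
  show "(F has_real_derivative f x) (at x)" if "x > 0" for x
  proof -
    have e: "at x within {0..} = at x"
      by (rule at_within_interior) (simp add: interior_real_atLeast that)
    have "(F has_real_derivative f x) (at x within {0..})" using d that by simp
    then show ?thesis using e by simp
  qed
  show "f x \<ge> 0" if "x \<ge> 0" for x using fn that by simp
  show "(F has_real_derivative f 0) (at 0 within {0..})" using d by simp
qed

lemma antimono_onD:
  "antimono_on A f \<Longrightarrow> r \<in> A \<Longrightarrow> s \<in> A \<Longrightarrow> r \<le> s \<Longrightarrow> f s \<le> f r"
  by (simp add: monotone_on_def)

lemma surv_ivt:
  assumes L: "lifetime F f" and p: "0 < p" "p < 1"
  shows "\<exists>x>0. surv F x = p"
proof -
  have lim: "(F \<longlongrightarrow> 1) at_top" using L unfolding lifetime_def by auto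
  have "\<forall>\<^sub>F y in at_top. 1 - p < F y" using order_tendstoD(1)[OF lim] p by simp
  then obtain b where b: "\<And>y. y \<ge> b \<Longrightarrow> 1 - p < F y" unfolding eventually_at_top_linorder by blast
  define b' where "b' = max b 1"
  have "1 - p < F b'" using b b'_def by simp
  moreover have "F 0 \<le> 1 - p" using lt_basic(1)[OF L] p by simp
  moreover have "continuous_on {0..b'} F"
    using lt_basic(4)[OF L] by (rule continuous_on_subset) auto
  ultimately obtain x where x: "0 \<le> x" "x \<le> b'" "F x = 1 - p"
    using IVT'[of F 0 "1-p" b'] b'_def by force
  have "x \<noteq> 0" using x lt_basic(1)[OF L] p by auto
  then show ?thesis using x by (auto simp: surv_def intro!: exI[of _ x])
qed

lemma deriv_nonneg_mono:
  fixes f :: "real \<Rightarrow> real"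
  assumes m: "mono_on S f" and S: "open S" "x \<in> S" and df: "f differentiable (at x)"
  shows "deriv f x \<ge> 0"
proof (rule ccontr)
  assume "\<not> deriv f x \<ge> 0"
  then have neg: "deriv f x < 0" by simp
  have D: "(f has_real_derivative deriv f x) (at x)"
    using df DERIV_deriv_iff_real_differentiable by blast
  obtain d where d: "d > 0" "\<And>h. h > 0 \<Longrightarrow> h < d \<Longrightarrow> f (x + h) < f x"
    using DERIV_neg_dec_right[OF D neg] by blast
  obtain e where e: "e > 0" "ball x e \<subseteq> S" using S open_contains_ball by blast
  define h where "h = min d e / 2"
  have h: "h > 0" "h < d" "h < e" using d e h_def by auto
  have "x + h \<in> S" using e h by (auto simp: dist_real_def)
  then have "f x \<le> f (x + h)" using mono_onD[OF m S(2)] h by simp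
  moreover have "f (x + h) < f x" using d h by simp
  ultimately show False by simp
qed

lemma deriv_nonpos_antimono:
  fixes f :: "real \<Rightarrow> real"
  assumes m: "antimono_on S f" and S: "open S" "x \<in> S" and df: "f differentiable (at x)"
  shows "deriv f x \<le> 0"
proof (rule ccontr)
  assume "\<not> deriv f x \<le> 0"
  then have neg: "deriv f x > 0" by simp
  have D: "(f has_real_derivative deriv f x) (at x)"
    using df DERIV_deriv_iff_real_differentiable by blast
  obtain d where d: "d > 0" "\<And>h. h > 0 \<Longrightarrow> h < d \<Longrightarrow> f x < f (x + h)"
    using DERIV_pos_inc_right[OF D neg] by blast
  obtain e where e: "e > 0" "ball x e \<subseteq> S" using S open_contains_ball by blast
  define h where "h = min d e / 2"
  have h: "h > 0" "h < d" "h < e" using d e h_def by auto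
  have "x + h \<in> S" using e h by (auto simp: dist_real_def)
  then have "f (x + h) \<le> f x" using antimono_onD[OF m S(2)] h by simp
  moreover have "f x < f (x + h)" using d h by simp
  ultimately show False by simp
qed

lemma sys_facts:
  assumes LF: "lifetime F f" and LG: "lifetime G g" and hd: "domination_fun h"
    and hdiff: "\<forall>p\<in>{0<..<1}. h differentiable (at p)"
    and sys: "\<forall>x\<ge>0. surv G x = h (surv F x)"
  shows "\<And>p. 0 < p \<Longrightarrow> p < 1 \<Longrightarrow> h p > 0"
    and "\<And>p. 0 < p \<Longrightarrow> p < 1 \<Longrightarrow> Hfun h p \<ge> 0"
    and "\<And>x. x > 0 \<Longrightarrow> g x = deriv h (surv F x) * f x"
    and "\<And>x. x > 0 \<Longrightarrow> hazard G g x = Hfun h (surv F x) * hazard F f x"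
    and "\<not> (\<exists>p0\<in>{0<..<1}. \<forall>p\<in>{p0<..<1}. Hfun h p = 0)"
proof -
  have hm: "mono_on {0..1} h" and hc: "continuous_on {0..1} h" and h1: "h 1 = 1"
    using hd unfolding domination_fun_def by auto
  show hpos: "h p > 0" if pp: "0 < p" "p < 1" for p
  proof -
    obtain x where x: "x > 0" "surv F x = p" using surv_ivt[OF LF pp] by blast
    have "surv G x = h (surv F x)" using sys x(1) by simp
    then have "h p = 1 - G x" using x(2) by (simp add: surv_def)
    then show ?thesis using lt_basic(3)[OF LG, of x] x by simp
  qed
  have dnn: "deriv h p \<ge> 0" if "0 < p" "p < 1" for p
  proof (rule deriv_nonneg_mono[of "{0<..<1}"])
    show "mono_on {0<..<1} h" using hm by (rule mono_on_subset) auto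
  qed (use that hdiff in auto)
  show "Hfun h p \<ge> 0" if "0 < p" "p < 1" for p
    using hpos[OF that] dnn[OF that] that unfolding Hfun_def by simp
  show gx: "g x = deriv h (surv F x) * f x" if "x > 0" for x
  proof -
    define p where "p = surv F x"
    have p: "0 < p" "p < 1" using lt_basic(2,3)[OF LF, of x] that p_def by (auto simp: surv_def)
    have Dh: "(h has_real_derivative deriv h p) (at p)"
      using hdiff p DERIV_deriv_iff_real_differentiable by auto
    have DF: "((\<lambda>y. 1 - F y) has_real_derivative - f x) (at x)"
      using lt_basic(5)[OF LF that] by (auto intro!: derivative_eq_intros)
    have "((\<lambda>y. h (1 - F y)) has_real_derivative deriv h p * (- f x)) (at x)"
    proof -
      have Dh': "(h has_real_derivative deriv h p) (at (1 - F x))" using Dh p_def by (simp add: surv_def)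
      show ?thesis using DERIV_chain2[OF Dh' DF] .
    qed
    then have "((\<lambda>y. 1 - h (1 - F y)) has_real_derivative deriv h p * f x) (at x)"
      by (auto intro!: derivative_eq_intros)
    then have "(G has_real_derivative deriv h p * f x) (at x)"
    proof (rule has_field_derivative_transform_within_open[of _ _ _ "{0<..}"])
      show "1 - h (1 - F y) = G y" if "y \<in> {0<..}" for y
        using sys[rule_format, of y] that by (auto simp: surv_def)
    qed (use that in auto)
    then show ?thesis using DERIV_unique lt_basic(5)[OF LG that] p_def by blast
  qed
  show "hazard G g x = Hfun h (surv F x) * hazard F f x" if "x > 0" for x
  proof -
    define p where "p = surv F x"
    have p: "0 < p" "p < 1" using lt_basic(2,3)[OF LF, of x] that p_def by (auto simp: surv_def)
    have "surv G x = h p" unfolding p_def using sys that by simp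
    have gx': "g x = deriv h p * f x" using gx[OF that] p_def by simp
    have "hazard G g x = deriv h p * f x / h p" unfolding hazard_def using gx' \<open>surv G x = h p\<close> by simp
    also have "\<dots> = (p * deriv h p / h p) * (f x / p)" using p hpos[OF p] by (simp add: field_simps)
    also have "\<dots> = Hfun h (surv F x) * hazard F f x" unfolding Hfun_def hazard_def p_def by simp
    finally show ?thesis .
  qed
  show "\<not> (\<exists>p0\<in>{0<..<1}. \<forall>p\<in>{p0<..<1}. Hfun h p = 0)"
  proof
    assume "\<exists>p0\<in>{0<..<1}. \<forall>p\<in>{p0<..<1}. Hfun h p = 0"
    then obtain p0 where p0: "0 < p0" "p0 < 1" and z: "\<And>p. p0 < p \<Longrightarrow> p < 1 \<Longrightarrow> Hfun h p = 0"
      by auto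
    have dz: "deriv h y = 0" if "p0 < y" "y < 1" for y
      using z[OF that] hpos[of y] that p0 unfolding Hfun_def by auto
    define p where "p = (p0 + 1) / 2"
    have p: "p0 < p" "p < 1" using p0 p_def by auto
    have "continuous_on {p..1} h" using hc by (rule continuous_on_subset) (use p p0 in auto)
    then obtain l z where lz: "p < z" "z < 1" "(h has_real_derivative l) (at z)" "h 1 - h p = (1 - p) * l"
    proof -
      have "h differentiable at y" if "p < y" "y < 1" for y using hdiff that p p0 by auto
      then show ?thesis using MVT[of p 1 h] p \<open>continuous_on {p..1} h\<close> that by blast
    qed
    have "h differentiable at z" using hdiff lz p p0 by simp
    then have "(h has_real_derivative deriv h z) (at z)" using DERIV_deriv_iff_real_differentiable by blast
    then have "l = deriv h z" using DERIV_unique[OF lz(3)] by blast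
    then have "l = 0" using dz lz p by auto
    then have hp: "h p = 1" using lz h1 by simp
    have "0 < p" using p p0 by simp
    then obtain x where x: "x > 0" "surv F x = p" using surv_ivt[OF LF _ p(2)] by blast
    have "surv G x = h (surv F x)" using sys x(1) by simp
    then have "surv G x = h p" using x(2) by simp
    then have "G x = 0" using hp by (simp add: surv_def)
    moreover have "G 0 < G x"
    proof -
      have "strict_mono_on {0..} G" using LG unfolding lifetime_def by blast
      then show ?thesis using x by (simp add: strict_mono_onD)
    qed
    moreover have "G 0 = 0" using lt_basic(1)[OF LG] .
    ultimately show False by simp
  qed
qed

lemma deriv_nonneg_mono':
  fixes f :: "real \<Rightarrow> real"
  assumes m: "mono_on S f" and S: "open S" "x \<in> S" and D: "(f has_real_derivative D) (at x)"
  shows "D \<ge> 0"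
proof -
  have "f differentiable (at x)" using D real_differentiable_def by blast
  then have "deriv f x \<ge> 0" using deriv_nonneg_mono[OF m S] by blast
  moreover have "deriv f x = D" using D by (rule DERIV_imp_deriv)
  ultimately show ?thesis by simp
qed

lemma XY_facts:
  assumes LX: "lifetime FX fX" and LY: "lifetime FY fY"
    and af: "ages_faster FX fX FY fY" and rh: "rhr_le FY FX"
  shows "\<And>x. x > 0 \<Longrightarrow> FX x \<le> FY x"
    and "\<And>x. x > 0 \<Longrightarrow> fX x * FY x \<ge> FX x * fY x"
    and "\<And>x. x > 0 \<Longrightarrow> fY x > 0"
    and "\<And>x. x \<ge> 0 \<Longrightarrow> hazard FX fX x / hazard FY fY x \<ge> 0"
proof -
  have rm: "mono_on {0<..} (\<lambda>x. FX x / FY x)" using rh unfolding rhr_le_def .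
  have am: "mono_on {0..} (\<lambda>x. hazard FX fX x / hazard FY fY x)" using af unfolding ages_faster_def .
  have limX: "(FX \<longlongrightarrow> 1) at_top" and limY: "(FY \<longlongrightarrow> 1) at_top"
    using LX LY unfolding lifetime_def by auto
  show "FX x \<le> FY x" if x: "x > 0" for x
  proof -
    have lim: "((\<lambda>x. FX x / FY x) \<longlongrightarrow> 1 / 1) at_top"
      by (rule tendsto_divide[OF limX limY]) simp
    have "FX x / FY x \<le> 1"
    proof (rule tendsto_lowerbound[OF lim[simplified]])
      show "\<forall>\<^sub>F i in at_top. FX x / FY x \<le> FX i / FY i"
        unfolding eventually_at_top_linorder
        by (rule exI[of _ x]) (use x in \<open>auto intro: mono_onD[OF rm]\<close>)
    qed simp
    moreover have "FY x > 0" using lt_basic(2)[OF LY x] .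
    ultimately show ?thesis by (simp add: divide_le_eq_1)
  qed
  show b: "fX x * FY x \<ge> FX x * fY x" if x: "x > 0" for x
  proof -
    have FYp: "FY x > 0" using lt_basic(2)[OF LY x] .
    have D: "((\<lambda>x. FX x / FY x) has_real_derivative (fX x * FY x - FX x * fY x) / (FY x)\<^sup>2) (at x)"
      using lt_basic(5)[OF LX x] lt_basic(5)[OF LY x] FYp
      by (auto intro!: derivative_eq_intros simp: power2_eq_square)
    have "(fX x * FY x - FX x * fY x) / (FY x)\<^sup>2 \<ge> 0"
      using deriv_nonneg_mono'[OF rm _ _ D] x by simp
    then show ?thesis using FYp by (simp add: divide_nonneg_pos zero_le_divide_iff)
  qed
  have hnn: "hazard F f x \<ge> 0" if "lifetime F f" "x \<ge> 0" for F f x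
    using lt_basic(3,6)[OF that(1) that(2)] unfolding hazard_def surv_def by simp
  show "hazard FX fX x / hazard FY fY x \<ge> 0" if "x \<ge> 0" for x
    using hnn[OF LX that] hnn[OF LY that] by simp
  show "fY x > 0" if x: "x > 0" for x
  proof (rule ccontr)
    assume "\<not> fY x > 0"
    then have fz: "fY x = 0" using lt_basic(6)[OF LY, of x] x by simp
    have Bx: "hazard FX fX x / hazard FY fY x = 0" unfolding hazard_def fz by simp
    have "continuous_on {0..x} FY" using lt_basic(4)[OF LY] by (rule continuous_on_subset) auto
    moreover have "FY differentiable at y" if "0 < y" "y < x" for y
      using lt_basic(5)[OF LY, of y] that real_differentiable_def by blast
    ultimately obtain l z where lz: "0 < z" "z < x" "(FY has_real_derivative l) (at z)"
      "FY x - FY 0 = (x - 0) * l"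
      using MVT[of 0 x FY] x by blast
    have "l = fY z" using DERIV_unique[OF lz(3) lt_basic(5)[OF LY lz(1)]] .
    moreover have "FY x > 0" using lt_basic(2)[OF LY x] .
    ultimately have fYz: "fY z > 0" using lz lt_basic(1)[OF LY] x
      by (metis diff_zero zero_less_mult_pos)
    have "fX z * FY z \<ge> FX z * fY z" using b lz(1) by blast
    moreover have "FX z * fY z > 0" using lt_basic(2)[OF LX lz(1)] fYz by simp
    ultimately have "fX z * FY z > 0" by linarith
    moreover have "FY z > 0" using lt_basic(2)[OF LY lz(1)] .
    ultimately have fXz: "fX z > 0" using lt_basic(6)[OF LX, of z] lz(1)
      by (simp add: zero_less_mult_iff)
    have "hazard FX fX z / hazard FY fY z > 0"
      using fXz fYz lt_basic(3)[OF LX, of z] lt_basic(3)[OF LY, of z] lz(1)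
      unfolding hazard_def surv_def by simp
    moreover have "hazard FX fX z / hazard FY fY z \<le> hazard FX fX x / hazard FY fY x"
      using mono_onD[OF am, of z x] lz by simp
    ultimately show False using Bx by simp
  qed
qed

lemma deriv_nonpos_antimono':
  fixes f :: "real \<Rightarrow> real"
  assumes m: "antimono_on S f" and S: "open S" "x \<in> S" and D: "(f has_real_derivative D) (at x)"
  shows "D \<le> 0"
proof -
  have "f differentiable (at x)" using D real_differentiable_def by blast
  then have "deriv f x \<le> 0" using deriv_nonpos_antimono[OF m S] by blast
  moreover have "deriv f x = D" using D by (rule DERIV_imp_deriv)
  ultimately show ?thesis by simp
qed

lemma rderiv_nonneg:
  fixes \<phi> :: "real \<Rightarrow> real"
  assumes D: "(\<phi> has_real_derivative D) (at 0 within {0..})" and b: "b > 0"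
    and ge: "\<And>t. 0 < t \<Longrightarrow> t \<le> b \<Longrightarrow> \<phi> 0 \<le> \<phi> t"
  shows "D \<ge> 0"
proof -
  have "((\<lambda>y. (\<phi> y - \<phi> 0) / (y - 0)) \<longlongrightarrow> D) (at 0 within {0..})"
    using D has_field_derivative_iff by blast
  then have lim: "((\<lambda>y. (\<phi> y - \<phi> 0) / (y - 0)) \<longlongrightarrow> D) (at_right 0)"
    by (simp add: at_within_Ici_at_right)
  show ?thesis
  proof (rule tendsto_lowerbound[OF lim])
    show "\<forall>\<^sub>F y in at_right 0. 0 \<le> (\<phi> y - \<phi> 0) / (y - 0)"
      unfolding eventually_at_right_field
      by (rule exI[of _ b]) (use b ge in auto)
  qed simp
qed

lemma key_ineq:
  fixes a1 a2 b1 b2 al be :: real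
  assumes "a1 \<le> 0" "al \<ge> be" "be \<ge> 0"
    and "a2 \<le> 0 \<longrightarrow> (a1 \<le> b1 \<and> b1 \<le> a2) \<or> (a1 \<le> b2 \<and> b2 \<le> a2)"
  shows "- a1 * al + a2 * be \<ge> 0"
proof (cases "a2 > 0")
  case True
  then show ?thesis using assms
    by (smt (verit, best) mult_nonneg_nonneg mult_nonpos_nonneg)
next
  case False
  then have a2: "a2 \<le> 0" by simp
  from assms(4) a2 have "(a1 \<le> b1 \<and> b1 \<le> a2) \<or> (a1 \<le> b2 \<and> b2 \<le> a2)" by blast
  then show "- a1 * al + a2 * be \<ge> 0"
  proof
    assume h: "a1 \<le> b1 \<and> b1 \<le> a2"
    have "- a1 * al \<ge> - a1 * be" using assms mult_left_mono_neg[of be al a1] by simp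
    moreover have "- a1 * be \<ge> - a2 * be" using assms h mult_right_mono[of a1 a2 be] by simp
    ultimately show ?thesis by simp
  next
    assume h: "a1 \<le> b2 \<and> b2 \<le> a2"
    have "- a1 * al \<ge> - b2 * al" using assms h mult_right_mono[of a1 b2 al] by simp
    moreover have "- b2 * al \<ge> - b2 * be" using assms h a2 mult_left_mono_neg[of be al b2] by simp
    moreover have "- b2 * be \<ge> - a2 * be" using assms h mult_right_mono[of b2 a2 be] by simp
    ultimately show ?thesis by simp
  qed
qed

theorem theorem3p1:
  fixes FX fX FY fY G1 g1 G2 g2 h1 h2 :: "real \<Rightarrow> real"
  assumes X: "lifetime FX fX" and Y: "lifetime FY fY"
    and T1: "lifetime G1 g1" and T2: "lifetime G2 g2"
    and h1: "domination_fun h1" and h2: "domination_fun h2"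
    and h1_diff: "\<forall>p\<in>{0<..<1}. h1 differentiable (at p)"
    and h2_diff: "\<forall>p\<in>{0<..<1}. h2 differentiable (at p)"
    and H1_diff: "\<forall>p\<in>{0<..<1}. Hfun h1 differentiable (at p)"
    and H2_diff: "\<forall>p\<in>{0<..<1}. Hfun h2 differentiable (at p)"
    and sys1: "\<forall>x\<ge>0. surv G1 x = h1 (surv FX x)"
    and sys2: "\<forall>x\<ge>0. surv G2 x = h2 (surv FY x)"
    and i1: "antimono_on {0<..<1} (Hfun h1)"
    and i2: "antimono_on {0<..<1} (\<lambda>p. Hfun h1 p / Hfun h2 p)"
    and ii: "antimono_on {0<..<1} (\<lambda>p. (1 - p) * deriv (Hfun h1) p / Hfun h1 p)
           \<or> antimono_on {0<..<1} (\<lambda>p. (1 - p) * deriv (Hfun h2) p / Hfun h2 p)"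
    and iii1: "ages_faster FX fX FY fY"
    and iii2: "rhr_le FY FX"
  shows "ages_faster G1 g1 G2 g2"
proof -
  note S1 = sys_facts[OF X T1 h1 h1_diff sys1]
  note S2 = sys_facts[OF Y T2 h2 h2_diff sys2]
  note XY = XY_facts[OF X Y iii1 iii2]
  define \<psi>1 where "\<psi>1 = (\<lambda>p. (1 - p) * deriv (Hfun h1) p / Hfun h1 p)"
  define \<psi>2 where "\<psi>2 = (\<lambda>p. (1 - p) * deriv (Hfun h2) p / Hfun h2 p)"
  have H1pos: "Hfun h1 p > 0" if p: "0 < p" "p < 1" for p
  proof (rule ccontr)
    assume "\<not> Hfun h1 p > 0"
    then have z: "Hfun h1 p = 0" using S1(2)[OF p] by simp
    have "\<forall>t\<in>{p<..<1}. Hfun h1 t = 0"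
    proof
      fix t assume t: "t \<in> {p<..<1}"
      have "Hfun h1 t \<le> Hfun h1 p" using antimono_onD[OF i1, of p t] t p by simp
      then show "Hfun h1 t = 0" using z S1(2)[of t] t p by simp
    qed
    then show False using S1(5) p by auto
  qed
  have H2pos: "Hfun h2 p > 0" if p: "0 < p" "p < 1" for p
  proof (rule ccontr)
    assume "\<not> Hfun h2 p > 0"
    then have z: "Hfun h2 p = 0" using S2(2)[OF p] by simp
    have "\<forall>t\<in>{p<..<1}. Hfun h2 t = 0"
    proof
      fix t assume t: "t \<in> {p<..<1}"
      have "Hfun h1 t / Hfun h2 t \<le> Hfun h1 p / Hfun h2 p" using antimono_onD[OF i2, of p t] t p by simp
      then have "Hfun h1 t / Hfun h2 t \<le> 0" using z by simp
      moreover have "Hfun h1 t > 0" using H1pos[of t] t p by simp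
      moreover have "Hfun h2 t \<ge> 0" using S2(2)[of t] t p by simp
      ultimately show "Hfun h2 t = 0"
        by (metis divide_pos_pos less_eq_real_def linorder_not_le)
    qed
    then show False using S2(5) p by auto
  qed
  have dH1: "(Hfun h1 has_real_derivative deriv (Hfun h1) p) (at p)" if "0 < p" "p < 1" for p
    using H1_diff that DERIV_deriv_iff_real_differentiable by auto
  have dH2: "(Hfun h2 has_real_derivative deriv (Hfun h2) p) (at p)" if "0 < p" "p < 1" for p
    using H2_diff that DERIV_deriv_iff_real_differentiable by auto
  have psi1_nonpos: "\<psi>1 p \<le> 0" if p: "0 < p" "p < 1" for p
  proof -
    have "deriv (Hfun h1) p \<le> 0"
      using deriv_nonpos_antimono[OF i1, of p] H1_diff p by simp
    then show ?thesis unfolding \<psi>1_def using H1pos[OF p] p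
      by (simp add: divide_nonpos_pos mult_nonneg_nonpos)
  qed
  have psi_le: "\<psi>1 p \<le> \<psi>2 p" if p: "0 < p" "p < 1" for p
  proof -
    have D: "((\<lambda>p. Hfun h1 p / Hfun h2 p) has_real_derivative
        (deriv (Hfun h1) p * Hfun h2 p - Hfun h1 p * deriv (Hfun h2) p) / (Hfun h2 p * Hfun h2 p)) (at p)"
      using DERIV_divide[OF dH1[OF p] dH2[OF p]] H2pos[OF p] by simp
    have "(deriv (Hfun h1) p * Hfun h2 p - Hfun h1 p * deriv (Hfun h2) p) / (Hfun h2 p * Hfun h2 p) \<le> 0"
      using deriv_nonpos_antimono'[OF i2 _ _ D] p by simp
    then have n: "deriv (Hfun h1) p * Hfun h2 p - Hfun h1 p * deriv (Hfun h2) p \<le> 0"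
    proof -
      have "Hfun h2 p * Hfun h2 p > 0" using H2pos[OF p] by simp
      then show ?thesis using \<open>_ \<le> 0\<close> by (simp add: divide_le_0_iff not_le[symmetric])
    qed
    have "deriv (Hfun h1) p / Hfun h1 p - deriv (Hfun h2) p / Hfun h2 p
        = (deriv (Hfun h1) p * Hfun h2 p - Hfun h1 p * deriv (Hfun h2) p) / (Hfun h1 p * Hfun h2 p)"
      using H1pos[OF p] H2pos[OF p] by (simp add: field_simps)
    also have "\<dots> \<le> 0" using n H1pos[OF p] H2pos[OF p] by (simp add: divide_nonpos_pos)
    finally have "deriv (Hfun h1) p / Hfun h1 p \<le> deriv (Hfun h2) p / Hfun h2 p" by simp
    then have "(1 - p) * (deriv (Hfun h1) p / Hfun h1 p) \<le> (1 - p) * (deriv (Hfun h2) p / Hfun h2 p)"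
      using p by (intro mult_left_mono) auto
    then show ?thesis unfolding \<psi>1_def \<psi>2_def by (simp add: times_divide_eq_right)
  qed
  have survfun: "\<And>F. surv F = (\<lambda>y. 1 - F y)" by (rule ext) (simp add: surv_def)
  define A where "A = (\<lambda>x. Hfun h1 (surv FX x) / Hfun h2 (surv FY x))"
  define B where "B = (\<lambda>x. hazard FX fX x / hazard FY fY x)"
  define R where "R = (\<lambda>x. hazard G1 g1 x / hazard G2 g2 x)"
  have pq: "0 < surv FX x" "surv FX x < 1" "0 < surv FY x" "surv FY x < 1" if "x > 0" for x
    using lt_basic(2,3)[OF X, of x] lt_basic(2,3)[OF Y, of x] that by (auto simp: surv_def)
  have Ader: "\<exists>y. (A has_real_derivative y) (at x) \<and> 0 \<le> y" if x: "x > 0" for x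
  proof -
    define p where "p = surv FX x"
    define q where "q = surv FY x"
    have p: "0 < p" "p < 1" and q: "0 < q" "q < 1" using pq[OF x] p_def q_def by auto
    have dX: "(surv FX has_real_derivative - fX x) (at x)"
      unfolding survfun using lt_basic(5)[OF X x] by (auto intro!: derivative_eq_intros)
    have dY: "(surv FY has_real_derivative - fY x) (at x)"
      unfolding survfun using lt_basic(5)[OF Y x] by (auto intro!: derivative_eq_intros)
    have d1: "((\<lambda>x. Hfun h1 (surv FX x)) has_real_derivative deriv (Hfun h1) p * (- fX x)) (at x)"
      using DERIV_chain2[OF dH1[OF p, unfolded p_def] dX] p_def by simp
    have d2: "((\<lambda>x. Hfun h2 (surv FY x)) has_real_derivative deriv (Hfun h2) q * (- fY x)) (at x)"
      using DERIV_chain2[OF dH2[OF q, unfolded q_def] dY] q_def by simp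
    define N where "N = deriv (Hfun h1) p * (- fX x) * Hfun h2 q - Hfun h1 p * (deriv (Hfun h2) q * (- fY x))"
    have DA: "(A has_real_derivative N / (Hfun h2 q * Hfun h2 q)) (at x)"
      unfolding A_def N_def using DERIV_divide[OF d1 d2] H2pos[OF q] p_def q_def by simp
    define al where "al = fX x / FX x"
    define be where "be = fY x / FY x"
    have FXp: "FX x > 0" and FYp: "FY x > 0" using lt_basic(2)[OF X x] lt_basic(2)[OF Y x] by auto
    have be0: "be \<ge> 0" unfolding be_def using lt_basic(6)[OF Y, of x] x FYp by simp
    have albe: "al \<ge> be"
    proof -
      have "al - be = (fX x * FY x - FX x * fY x) / (FX x * FY x)"
        unfolding al_def be_def using FXp FYp by (simp add: field_simps)
      also have "\<dots> \<ge> 0" using XY(2)[OF x] FXp FYp by simp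
      finally show ?thesis by simp
    qed
    have qp: "q \<le> p" using XY(1)[OF x] p_def q_def by (simp add: surv_def)
    have disj: "\<psi>2 q \<le> 0 \<longrightarrow> (\<psi>1 p \<le> \<psi>1 q \<and> \<psi>1 q \<le> \<psi>2 q) \<or> (\<psi>1 p \<le> \<psi>2 p \<and> \<psi>2 p \<le> \<psi>2 q)"
      using ii
    proof
      assume a: "antimono_on {0<..<1} (\<lambda>p. (1 - p) * deriv (Hfun h1) p / Hfun h1 p)"
      have "\<psi>1 p \<le> \<psi>1 q" using antimono_onD[OF a, of q p] p q qp unfolding \<psi>1_def by simp
      then show ?thesis using psi_le[OF q] by simp
    next
      assume a: "antimono_on {0<..<1} (\<lambda>p. (1 - p) * deriv (Hfun h2) p / Hfun h2 p)"
      have "\<psi>2 p \<le> \<psi>2 q" using antimono_onD[OF a, of q p] p q qp unfolding \<psi>2_def by simp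
      then show ?thesis using psi_le[OF p] by simp
    qed
    have K: "- \<psi>1 p * al + \<psi>2 q * be \<ge> 0"
      by (rule key_ineq[OF psi1_nonpos[OF p] albe be0 disj])
    have FXe: "FX x = 1 - p" and FYe: "FY x = 1 - q" using p_def q_def by (auto simp: surv_def)
    have e1: "\<psi>1 p * al = deriv (Hfun h1) p * fX x / Hfun h1 p"
      unfolding \<psi>1_def al_def FXe using p H1pos[OF p] by (simp add: field_simps)
    have e2: "\<psi>2 q * be = deriv (Hfun h2) q * fY x / Hfun h2 q"
      unfolding \<psi>2_def be_def FYe using q H2pos[OF q] by (simp add: field_simps)
    have "Hfun h1 p * Hfun h2 q * (- \<psi>1 p * al + \<psi>2 q * be)
        = Hfun h1 p * Hfun h2 q * (- (deriv (Hfun h1) p * fX x / Hfun h1 p) + deriv (Hfun h2) q * fY x / Hfun h2 q)"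
      using e1 e2 by simp
    also have "\<dots> = N" unfolding N_def
      using H1pos[OF p] H2pos[OF q] by (simp add: field_simps)
    finally have "N = Hfun h1 p * Hfun h2 q * (- \<psi>1 p * al + \<psi>2 q * be)" by simp
    also have "\<dots> \<ge> 0" using K H1pos[OF p] H2pos[OF q] by simp
    finally have "N \<ge> 0" .
    then have "N / (Hfun h2 q * Hfun h2 q) \<ge> 0" by simp
    then show ?thesis using DA by blast
  qed
  have Amono: "A a \<le> A b" if "0 < a" "a \<le> b" for a b
    by (rule DERIV_nonneg_imp_nondecreasing[OF that(2)]) (use that Ader in auto)
  have A0: "A x \<ge> 0" if "x > 0" for x
    unfolding A_def using H1pos[of "surv FX x"] H2pos[of "surv FY x"] pq[OF that] by simp
  have B0: "B x \<ge> 0" if "x \<ge> 0" for x unfolding B_def using XY(4)[OF that] .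
  have Bmono: "B x \<le> B y" if "0 \<le> x" "x \<le> y" for x y
    using iii1 unfolding ages_faster_def B_def using that by (auto intro: mono_onD)
  have RAB: "R x = A x * B x" if x: "x > 0" for x
    unfolding R_def A_def B_def using S1(4)[OF x] S2(4)[OF x] by simp
  have Rmono: "R x \<le> R y" if "0 < x" "x \<le> y" for x y
  proof -
    have "R x = A x * B x" using RAB that by simp
    also have "\<dots> \<le> A y * B x" using Amono[OF that] B0[of x] that by (simp add: mult_right_mono)
    also have "\<dots> \<le> A y * B y" using Bmono[of x y] A0[of y] that by (simp add: mult_left_mono)
    also have "\<dots> = R y" using RAB that by simp
    finally show ?thesis .
  qed
  have R0: "R 0 \<le> R x1" if x1: "x1 > 0" for x1
  proof -
    have G10: "G1 0 = 0" "G2 0 = 0" using lt_basic(1)[OF T1] lt_basic(1)[OF T2] by auto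
    have R0e: "R 0 = g1 0 / g2 0" unfolding R_def hazard_def surv_def using G10 by simp
    have Rx1: "R x1 \<ge> 0" using RAB[OF x1] A0[OF x1] B0[of x1] x1 by simp
    show ?thesis
    proof (cases "g2 0 = 0")
      case True
      then show ?thesis using R0e Rx1 by simp
    next
      case False
      then have g20: "g2 0 > 0" using lt_basic(6)[OF T2, of 0] by simp
      define c where "c = R x1"
      have hG2pos: "hazard G2 g2 t > 0" if t: "t > 0" for t
      proof -
        have "hazard FY fY t > 0" unfolding hazard_def surv_def
          using XY(3)[OF t] lt_basic(3)[OF Y, of t] t by simp
        then show ?thesis using S2(4)[OF t] H2pos[OF pq(3,4)[OF t]] by simp
      qed
      have hle: "hazard G1 g1 t \<le> c * hazard G2 g2 t" if t: "0 < t" "t \<le> x1" for t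
      proof -
        have "R t \<le> c" using Rmono[OF t] c_def by simp
        then have "hazard G1 g1 t / hazard G2 g2 t \<le> c" unfolding R_def .
        then show ?thesis using hG2pos[OF t(1)] by (simp add: divide_le_eq)
      qed
      define \<phi> where "\<phi> = (\<lambda>t. c * - ln (1 - G2 t) + ln (1 - G1 t))"
      have G1lt: "1 - G1 t > 0" if "t \<ge> 0" for t using lt_basic(3)[OF T1 that] by simp
      have G2lt: "1 - G2 t > 0" if "t \<ge> 0" for t using lt_basic(3)[OF T2 that] by simp
      have \<phi>D: "(\<phi> has_real_derivative c * hazard G2 g2 t - hazard G1 g1 t) (at t)" if t: "t > 0" for t
      proof -
        have "(\<phi> has_real_derivative c * - (- g2 t / (1 - G2 t)) + (- g1 t / (1 - G1 t))) (at t)"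
          unfolding \<phi>_def using lt_basic(5)[OF T1 t] lt_basic(5)[OF T2 t] G1lt[of t] G2lt[of t] t
          by (auto intro!: derivative_eq_intros)
        then show ?thesis unfolding hazard_def surv_def by simp
      qed
      have \<phi>mono: "\<phi> 0 \<le> \<phi> t" if t: "0 < t" "t \<le> x1" for t
      proof (rule DERIV_nonneg_imp_increasing_open[of 0 t])
        show "0 \<le> t" using t by simp
        fix y assume y: "0 < y" "y < t"
        show "\<exists>d. (\<phi> has_real_derivative d) (at y) \<and> 0 \<le> d"
          using \<phi>D[OF y(1)] hle[of y] y t by auto
      next
        have c1: "continuous_on {0..t} G1" using lt_basic(4)[OF T1] by (rule continuous_on_subset) auto
        have c2: "continuous_on {0..t} G2" using lt_basic(4)[OF T2] by (rule continuous_on_subset) auto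
        show "continuous_on {0..t} \<phi>" unfolding \<phi>_def
          using G1lt G2lt by (auto intro!: continuous_intros c1 c2 simp: less_imp_neq[symmetric])
      qed
      have \<phi>0: "\<phi> 0 = 0" unfolding \<phi>_def using G10 by simp
      have \<phi>D0: "(\<phi> has_real_derivative c * g2 0 - g1 0) (at 0 within {0..})"
      proof -
        have "(\<phi> has_real_derivative c * - (- g2 0 / (1 - G2 0)) + (- g1 0 / (1 - G1 0))) (at 0 within {0..})"
          unfolding \<phi>_def using lt_basic(7)[OF T1] lt_basic(7)[OF T2] G10
          by (auto intro!: derivative_eq_intros)
        then show ?thesis using G10 by simp
      qed
      have "c * g2 0 - g1 0 \<ge> 0" by (rule rderiv_nonneg[OF \<phi>D0 x1 \<phi>mono])
      then show ?thesis using R0e g20 c_def by (simp add: divide_le_eq)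
    qed
  qed
  show ?thesis
    unfolding ages_faster_def R_def[symmetric]
  proof (rule mono_onI)
    fix r s :: real assume rs: "r \<in> {0..}" "s \<in> {0..}" "r \<le> s"
    show "R r \<le> R s"
    proof (cases "r = 0")
      case True
      then show ?thesis using R0[of s] rs by (cases "s = 0") auto
    next
      case False
      then show ?thesis using Rmono[of r s] rs by auto
    qed
  qed
qed

end
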